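(* Let $\omega\in\mathbb{C}^*$. For every $[D]\in\mathcal{D}(\vec B)$, $$F([D])=\omega^{2\,\mathrm{wr}(D)}\;\mathcal{C}(b_{\rm out};\partial_{\rm out}D)\circ G([D])\circ\mathcal{C}(b_{\rm in};\partial_{\rm in}D),$$ where $\partial_{\rm out}D$ and $\partial_{\rm in}D$ carry their vertical orderings and $b_{\rm out},b_{\rm in}$ carry their boundary-orientations.
   Context: Directed biangle. Let $\mathbb{B}=[0,1]\times\mathbb{R}$ with its standard orientation, boundary arcs $b_{\rm out}=\{0\}\times\mathbb{R}$, $b_{\rm in}=\{1\}\times\mathbb{R}$; the $\mathbb{R}$-coordinate is the horizontal coordinate. The boundary-orientation (compatible with clockwise traversal) is the direction of increasing $\mathbb{R}$-coordinate on $b_{\rm out}$ and of decreasing $\mathbb{R}$-coordinate on $b_{\rm in}$. Diagrams. A boundary-ordered oriented tangle diagram $D$ in $\mathbb{B}$: compact oriented 1-manifold properly immersed in $\mathbb{B}$, with only finitely many transverse interior double points (crossings) carrying over/under information, plus a total order $\succ$ ("vertical ordering") on the distinct endpoints on each of $b_{\rm in}$, $b_{\rm out}$; $\partial_{\rm in}D=\partial D\cap b_{\rm in}$, $\partial_{\rm out}D=\partial D\cap b_{\rm out}$. $\mathcal{D}(\vec B)$: classes modulo isotopy through such diagrams and framed Reidemeister moves I (cancellation of adjacent opposite kinks), II, III. Crossing sign: $+1$ if (tangent of over-strand, tangent of under-strand) is positively oriented, else $-1$; $\mathrm{wr}(D)$ = sum of signs. $[D_1]\otimes[D_2]$: disjoint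 union, $D_1$ at smaller horizontal coordinates, all endpoints of $D_2$ vertically above those of $D_1$ on each arc. $[D_1]\circ[D_2]$ (if $|\partial_{\rm in}D_1|=|\partial_{\rm out}D_2|$ and the horizontal-order-preserving bijection preserves vertical orders and orientations): glue $b_{\rm in}$ of $D_1$'s biangle to $b_{\rm out}$ of $D_2$'s. $V=\mathbb{C}^2$, basis $\xi_+,\xi_-$; factors of $V^{\otimes|\partial_{\rm in}D|}$, $V^{\otimes|\partial_{\rm out}D|}$ correspond to endpoints in increasing horizontal order. For a finite set $Z\subset b$ of a boundary arc $b$ and a state $s_0:Z\to\{\pm\}$, with basis vector $\xi^{s_0}=\xi_{s_0(z_1)}\otimes\cdots\otimes\xi_{s_0(z_k)}$ ($z_i$ in increasing horizontal order), the signed order correction amount is $\mathcal{C}(b;Z,s_0)=\sum_{x,y\in Z,\ x\prec y}\mathrm{sgn}(b;\overrightarrow{xy})\,s_0(x)s_0(y)$ (signs read as $\pm1$, $x\prec y$ in the vertical ordering), where $\mathrm{sgn}(b;\overrightarrow{xy})=+1$ if the direction from $x$ to $y$ along $b$ agrees with the boundary-orientation of $b$ and $-1$ otherwise; the signed order correction operator $\mathcal{C}(b;Z):V^{\otimes|Z|}\to V^{\otimes|Z|}$ is the diagonal map $\xi^{s_0}\mapsto\omega^{\mathcal{C}(b;Z,s_0)}\xi^{s_0}$. Elementary diagrams ($x_1,x_2\in b_{\rm in}$, $y_1,y_2\in b_{\rm out}$, with $x_1$ below $x_2$, $y_1$ below $y_2$ horizontally): identity (one arc $b_{\rm in}\to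 b_{\rm out}$); cup (one arc with ends $y_1\succ y_2$ on $b_{\rm out}$); cap (one arc with ends $x_1\succ x_2$ on $b_{\rm in}$); height exchange type 1 (disjoint arcs $x_1$–$y_1$, $x_2$–$y_2$, $x_1\succ x_2$, $y_2\succ y_1$) and type 2 ($x_2\succ x_1$, $y_1\succ y_2$); positive/negative crossing (arcs $x_1$–$y_2$, $x_2$–$y_1$ with one crossing of sign $+1$/$-1$, both oriented from $b_{\rm in}$ to $b_{\rm out}$ or both reversed, $x_1\succ x_2$, $y_1\succ y_2$). Orientations of non-crossing elementary arcs are arbitrary. $G$: the unique map $[D]\mapsto G([D]):V^{\otimes|\partial_{\rm in}D|}\to V^{\otimes|\partial_{\rm out}D|}$, multiplicative for $\circ$ and $\otimes$, with values: identity $\mapsto\mathrm{id}$; cup: $1\mapsto\xi_+\otimes\xi_--\omega^4\xi_-\otimes\xi_+$; cap: $\xi_+\otimes\xi_-\mapsto-\omega^{-4}$, $\xi_-\otimes\xi_+\mapsto1$, others $0$; height exchange type 1: $\xi_+\otimes\xi_-\mapsto\xi_+\otimes\xi_-+(\omega^4-\omega^{-4})\xi_-\otimes\xi_+$, others fixed, type 2 the inverse; positive crossing: $\xi_i\otimes\xi_i\mapsto\omega^{-4}\xi_i\otimes\xi_i$, $\xi_+\otimes\xi_-\mapsto\xi_-\otimes\xi_+$, $\xi_-\otimes\xi_+\mapsto\xi_+\otimes\xi_-+(\omega^{-4}-\omega^4)\xi_-\otimes\xi_+$; negative crossing the inverse. $F$ (Reshetikhin–Turaev operator invariant for the 2-dimensional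 representation of $\mathcal{U}_q(\mathfrak{sl}_2)$, known to exist): the unique map with the same source/target, multiplicative for $\circ$ and $\otimes$, with values: identity $\mapsto\mathrm{id}$; cup: $1\mapsto\omega\,\xi_+\otimes\xi_--\omega^5\xi_-\otimes\xi_+$; cap: $\xi_+\otimes\xi_-\mapsto-\omega^{-5}$, $\xi_-\otimes\xi_+\mapsto\omega^{-1}$, others $0$; height exchange type 1 (map $M$): $\xi_i\otimes\xi_i\mapsto\omega^2\xi_i\otimes\xi_i$, $\xi_+\otimes\xi_-\mapsto\omega^{-2}(\xi_+\otimes\xi_-+(\omega^4-\omega^{-4})\xi_-\otimes\xi_+)$, $\xi_-\otimes\xi_+\mapsto\omega^{-2}\xi_-\otimes\xi_+$; type 2: $M^{-1}$; positive crossing: $M^{-1}\circ P$ where $P(\xi_i\otimes\xi_j)=\xi_j\otimes\xi_i$; negative crossing: $(M^{-1}\circ P)^{-1}$. *)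

theory Defs
  imports Complex_Main
begin

text \<open>
Combinatorial model of boundary-ordered oriented tangle diagrams in the directed biangle.
Every diagram is (up to isotopy) a composition (\<circ>) of tensor products (\<otimes>) of the
elementary diagrams, and F, G are the unique maps multiplicative for \<circ> and \<otimes> with the
prescribed values on elementary diagrams.  We therefore represent diagrams by
expressions built from elementary diagrams, the empty diagram, \<otimes> and \<circ>, together with
their boundary data.

Boundary data on an arc: a list, in increasing horizontal order, of endpoints.
For each endpoint we record its vertical rank (heights form a permutation of
0..n-1; x \<prec> y iff rank x < rank y) and a direction flag: True iff the strand
at that endpoint is oriented in the direction from b_in to b_out
(so gluing preserves orientations iff the flags agree).

States: True = +, False = -.  A linear map V^{\<otimes>m} \<rightarrow> V^{\<otimes>n} is encoded by its
matrix coefficients  A t s = coefficient of \<xi>^t in A(\<xi>^s).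
\<close>

datatype elem =
    EId bool            \<comment> \<open>identity arc; flag = direction\<close>
  | ECup bool           \<comment> \<open>cup, ends y1 \<succ> y2 on b_out; flag = direction at y1\<close>
  | ECap bool           \<comment> \<open>cap, ends x1 \<succ> x2 on b_in; flag = direction at x1\<close>
  | EHE1 bool bool      \<comment> \<open>height exchange type 1, directions of the arcs x1-y1, x2-y2\<close>
  | EHE2 bool bool
  | EPos bool           \<comment> \<open>positive crossing; True: both strands b_in \<rightarrow> b_out, False: both reversed\<close>
  | ENeg bool

datatype diag = DEmpty | DElem elem | DTens diag diag | DComp diag diag

fun elem_in_hts :: "elem \<Rightarrow> nat list" where
  "elem_in_hts (EId _) = [0]"
| "elem_in_hts (ECup _) = []"
| "elem_in_hts (ECap _) = [1, 0]"
| "elem_in_hts (EHE1 _ _) = [1, 0]"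
| "elem_in_hts (EHE2 _ _) = [0, 1]"
| "elem_in_hts (EPos _) = [1, 0]"
| "elem_in_hts (ENeg _) = [1, 0]"

fun elem_out_hts :: "elem \<Rightarrow> nat list" where
  "elem_out_hts (EId _) = [0]"
| "elem_out_hts (ECup _) = [1, 0]"
| "elem_out_hts (ECap _) = []"
| "elem_out_hts (EHE1 _ _) = [0, 1]"
| "elem_out_hts (EHE2 _ _) = [1, 0]"
| "elem_out_hts (EPos _) = [1, 0]"
| "elem_out_hts (ENeg _) = [1, 0]"

fun elem_in_dirs :: "elem \<Rightarrow> bool list" where
  "elem_in_dirs (EId o1) = [o1]"
| "elem_in_dirs (ECup _) = []"
| "elem_in_dirs (ECap o1) = [o1, \<not> o1]"
| "elem_in_dirs (EHE1 o1 o2) = [o1, o2]"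
| "elem_in_dirs (EHE2 o1 o2) = [o1, o2]"
| "elem_in_dirs (EPos o1) = [o1, o1]"
| "elem_in_dirs (ENeg o1) = [o1, o1]"

fun elem_out_dirs :: "elem \<Rightarrow> bool list" where
  "elem_out_dirs (EId o1) = [o1]"
| "elem_out_dirs (ECup o1) = [o1, \<not> o1]"
| "elem_out_dirs (ECap _) = []"
| "elem_out_dirs (EHE1 o1 o2) = [o1, o2]"
| "elem_out_dirs (EHE2 o1 o2) = [o1, o2]"
| "elem_out_dirs (EPos o1) = [o1, o1]"
| "elem_out_dirs (ENeg o1) = [o1, o1]"

text \<open>In D1 \<otimes> D2 the endpoints of D1 come first
horizontally and those of D2 lie vertically above those of D1.\<close>

fun in_hts :: "diag \<Rightarrow> nat list" where
  "in_hts DEmpty = []"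
| "in_hts (DElem e) = elem_in_hts e"
| "in_hts (DTens a b) = in_hts a @ map (\<lambda>h. h + length (in_hts a)) (in_hts b)"
| "in_hts (DComp a b) = in_hts b"

fun out_hts :: "diag \<Rightarrow> nat list" where
  "out_hts DEmpty = []"
| "out_hts (DElem e) = elem_out_hts e"
| "out_hts (DTens a b) = out_hts a @ map (\<lambda>h. h + length (out_hts a)) (out_hts b)"
| "out_hts (DComp a b) = out_hts a"

fun in_dirs :: "diag \<Rightarrow> bool list" where
  "in_dirs DEmpty = []"
| "in_dirs (DElem e) = elem_in_dirs e"
| "in_dirs (DTens a b) = in_dirs a @ in_dirs b"
| "in_dirs (DComp a b) = in_dirs b"

fun out_dirs :: "diag \<Rightarrow> bool list" where
  "out_dirs DEmpty = []"
| "out_dirs (DElem e) = elem_out_dirs e"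
| "out_dirs (DTens a b) = out_dirs a @ out_dirs b"
| "out_dirs (DComp a b) = out_dirs a"

text \<open>Composition D1 \<circ> D2 is defined iff the horizontal-order-preserving bijection
\<partial>_in D1 \<rightarrow> \<partial>_out D2 preserves vertical orders and orientations.\<close>

fun wf_diag :: "diag \<Rightarrow> bool" where
  "wf_diag DEmpty = True"
| "wf_diag (DElem e) = True"
| "wf_diag (DTens a b) = (wf_diag a \<and> wf_diag b)"
| "wf_diag (DComp a b) = (wf_diag a \<and> wf_diag b \<and> in_hts a = out_hts b \<and> in_dirs a = out_dirs b)"

fun elem_wr :: "elem \<Rightarrow> int" where
  "elem_wr (EPos _) = 1"
| "elem_wr (ENeg _) = -1"
| "elem_wr _ = 0"

fun writhe :: "diag \<Rightarrow> int" where
  "writhe DEmpty = 0"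
| "writhe (DElem e) = elem_wr e"
| "writhe (DTens a b) = writhe a + writhe b"
| "writhe (DComp a b) = writhe a + writhe b"

type_synonym mat = "bool list \<Rightarrow> bool list \<Rightarrow> complex"

definition mcomp :: "nat \<Rightarrow> mat \<Rightarrow> mat \<Rightarrow> mat" where
  "mcomp k A B = (\<lambda>t s. \<Sum>u\<in>{u :: bool list. length u = k}. A t u * B u s)"

definition mtens :: "nat \<Rightarrow> nat \<Rightarrow> mat \<Rightarrow> mat \<Rightarrow> mat" where
  "mtens n1 m1 A B = (\<lambda>t s. A (take n1 t) (take m1 s) * B (drop n1 t) (drop m1 s))"

definition mtab :: "((bool list \<times> bool list) \<times> complex) list \<Rightarrow> mat" where
  "mtab tab = (\<lambda>t s. case map_of tab (t, s) of Some c \<Rightarrow> c | None \<Rightarrow> 0)"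

definition idmat :: mat where
  "idmat = (\<lambda>t s. if t = s then 1 else 0)"

text \<open>Values of G on elementary diagrams (type 2 / negative crossing: the inverses,
written out explicitly).\<close>

fun G_elem :: "complex \<Rightarrow> elem \<Rightarrow> mat" where
  "G_elem w (EId _) = idmat"
| "G_elem w (ECup _) = mtab [(([True, False], []), 1), (([False, True], []), - (w ^ 4))]"
| "G_elem w (ECap _) = mtab [(([], [True, False]), - (inverse w ^ 4)), (([], [False, True]), 1)]"
| "G_elem w (EHE1 _ _) = mtab
     [(([True, True], [True, True]), 1), (([False, False], [False, False]), 1),
      (([True, False], [True, False]), 1), (([False, True], [True, False]), w ^ 4 - (inverse w ^ 4)),
      (([False, True], [False, True]), 1)]"
| "G_elem w (EHE2 _ _) = mtab
     [(([True, True], [True, True]), 1), (([False, False], [False, False]), 1),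
      (([True, False], [True, False]), 1), (([False, True], [True, False]), - (w ^ 4 - (inverse w ^ 4))),
      (([False, True], [False, True]), 1)]"
| "G_elem w (EPos _) = mtab
     [(([True, True], [True, True]), inverse w ^ 4), (([False, False], [False, False]), inverse w ^ 4),
      (([False, True], [True, False]), 1),
      (([True, False], [False, True]), 1), (([False, True], [False, True]), inverse w ^ 4 - (w ^ 4))]"
| "G_elem w (ENeg _) = mtab
     [(([True, True], [True, True]), w ^ 4), (([False, False], [False, False]), w ^ 4),
      (([True, False], [True, False]), w ^ 4 - (inverse w ^ 4)), (([False, True], [True, False]), 1),
      (([True, False], [False, True]), 1)]"

definition F_M :: "complex \<Rightarrow> mat" where
  "F_M w = mtab
     [(([True, True], [True, True]), w ^ 2), (([False, False], [False, False]), w ^ 2),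
      (([True, False], [True, False]), inverse w ^ 2),
      (([False, True], [True, False]), inverse w ^ 2 * (w ^ 4 - (inverse w ^ 4))),
      (([False, True], [False, True]), inverse w ^ 2)]"

definition F_Minv :: "complex \<Rightarrow> mat" where
  "F_Minv w = mtab
     [(([True, True], [True, True]), inverse w ^ 2), (([False, False], [False, False]), inverse w ^ 2),
      (([True, False], [True, False]), w ^ 2),
      (([False, True], [True, False]), - (w ^ 2) * (w ^ 4 - (inverse w ^ 4))),
      (([False, True], [False, True]), w ^ 2)]"

definition P_flip :: mat where
  "P_flip = (\<lambda>t s. if length s = 2 \<and> t = rev s then 1 else 0)"

fun F_elem :: "complex \<Rightarrow> elem \<Rightarrow> mat" where
  "F_elem w (EId _) = idmat"
| "F_elem w (ECup _) = mtab [(([True, False], []), w), (([False, True], []), - (w ^ 5))]"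
| "F_elem w (ECap _) = mtab [(([], [True, False]), - (inverse w ^ 5)), (([], [False, True]), inverse w)]"
| "F_elem w (EHE1 _ _) = F_M w"
| "F_elem w (EHE2 _ _) = F_Minv w"
| "F_elem w (EPos _) = mcomp 2 (F_Minv w) P_flip"
| "F_elem w (ENeg _) = mcomp 2 P_flip (F_M w)"  \<comment> \<open>(M^{-1} P)^{-1} = P^{-1} M = P M\<close>

fun Gop :: "complex \<Rightarrow> diag \<Rightarrow> mat" where
  "Gop w DEmpty = idmat"
| "Gop w (DElem e) = G_elem w e"
| "Gop w (DTens a b) = mtens (length (out_hts a)) (length (in_hts a)) (Gop w a) (Gop w b)"
| "Gop w (DComp a b) = mcomp (length (in_hts a)) (Gop w a) (Gop w b)"

fun Fop :: "complex \<Rightarrow> diag \<Rightarrow> mat" where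
  "Fop w DEmpty = idmat"
| "Fop w (DElem e) = F_elem w e"
| "Fop w (DTens a b) = mtens (length (out_hts a)) (length (in_hts a)) (Fop w a) (Fop w b)"
| "Fop w (DComp a b) = mcomp (length (in_hts a)) (Fop w a) (Fop w b)"

text \<open>Pairs (i, j) with x = z_i \<prec> y = z_j.  On b_out the boundary orientation is increasing
horizontal coordinate (sgn = +1 iff i < j); on b_in it is decreasing (sgn = +1 iff j < i).\<close>

definition sv :: "bool \<Rightarrow> int" where
  "sv b = (if b then 1 else -1)"

definition corr_out :: "nat list \<Rightarrow> bool list \<Rightarrow> int" where
  "corr_out hs s = (\<Sum>i<length hs. \<Sum>j<length hs.
      if hs ! i < hs ! j then (if i < j then 1 else -1) * sv (s ! i) * sv (s ! j) else 0)"

definition corr_in :: "nat list \<Rightarrow> bool list \<Rightarrow> int" where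
  "corr_in hs s = (\<Sum>i<length hs. \<Sum>j<length hs.
      if hs ! i < hs ! j then (if j < i then 1 else -1) * sv (s ! i) * sv (s ! j) else 0)"

definition corr_op :: "complex \<Rightarrow> (bool list \<Rightarrow> int) \<Rightarrow> mat" where
  "corr_op w c = (\<lambda>t s. if t = s then w powi c s else 0)"

end

theory Submission
  imports Defs
begin

lemma sum_split_add: "(\<Sum>i<n1+n2. f i) = (\<Sum>i<n1. f i) + (\<Sum>i<n2. f (n1+i)) "
  for f :: "nat \<Rightarrow> 'a::comm_monoid_add"
  by (induction n2) (simp_all add: add.assoc)

lemma dsum_split:
  fixes f :: "nat \<Rightarrow> nat \<Rightarrow> 'a::comm_monoid_add"
  shows "(\<Sum>i<n1+n2. \<Sum>j<n1+n2. f i j) =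
     (\<Sum>i<n1. \<Sum>j<n1. f i j) + (\<Sum>i<n1. \<Sum>j<n2. f i (n1+j)) +
     (\<Sum>i<n2. \<Sum>j<n1. f (n1+i) j) + (\<Sum>i<n2. \<Sum>j<n2. f (n1+i) (n1+j))"
  by (simp add: sum_split_add sum.distrib add_ac)

definition chg :: "bool list \<Rightarrow> int" where "chg t = sum_list (map sv t)"

lemma chg_nth: "chg t = (\<Sum>i<length t. sv (t!i))"
  unfolding chg_def by (simp add: sum_list_sum_nth atLeast0LessThan)

lemma chg_append: "chg (a @ b) = chg a + chg b"
  by (simp add: chg_def)

lemma corr_in_neg: "corr_in hs u = - corr_out hs u"
  unfolding corr_in_def corr_out_def
  by (auto simp: sum_negf[symmetric] intro!: sum.cong)

lemma corr_out_app:
  assumes "\<forall>h\<in>set hs1. h < length hs1" "length t1 = length hs1" "length t2 = length hs2"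
  shows "corr_out (hs1 @ map (\<lambda>h. h + length hs1) hs2) (t1 @ t2)
     = corr_out hs1 t1 + corr_out hs2 t2 + chg t1 * chg t2"
proof -
  let ?n = "length hs1"
  let ?hs = "hs1 @ map (\<lambda>h. h + length hs1) hs2"
  let ?t = "t1 @ t2"
  define f where "f i j = (if ?hs ! i < ?hs ! j then (if i < j then 1 else -1) * sv (?t ! i) * sv (?t ! j) else (0::int))" for i j
  have L: "length ?hs = ?n + length hs2" by simp
  have "corr_out ?hs ?t = (\<Sum>i<?n + length hs2. \<Sum>j<?n + length hs2. f i j)"
    unfolding corr_out_def f_def L ..
  also have "\<dots> = (\<Sum>i<?n. \<Sum>j<?n. f i j) + (\<Sum>i<?n. \<Sum>j<length hs2. f i (?n+j)) +
     (\<Sum>i<length hs2. \<Sum>j<?n. f (?n+i) j) + (\<Sum>i<length hs2. \<Sum>j<length hs2. f (?n+i) (?n+j))"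
    by (rule dsum_split)
  also have "(\<Sum>i<?n. \<Sum>j<?n. f i j) = corr_out hs1 t1"
    unfolding corr_out_def f_def using assms by (auto simp: nth_append intro!: sum.cong)
  also have "(\<Sum>i<?n. \<Sum>j<length hs2. f i (?n+j)) = (\<Sum>i<?n. \<Sum>j<length hs2. sv (t1!i) * sv (t2!j))"
  proof (intro sum.cong refl)
    fix i j assume "i \<in> {..<?n}" "j \<in> {..<length hs2}"
    moreover have hi: "hs1 ! i < ?n" using assms(1) \<open>i \<in> {..<?n}\<close> by auto
    ultimately show "f i (?n+j) = sv (t1!i) * sv (t2!j)"
    proof -
      have "?hs!i < ?hs!(?n+j)" using hi \<open>i \<in> {..<?n}\<close> \<open>j \<in> {..<length hs2}\<close> by (simp add: nth_append)
      then show ?thesis unfolding f_def using assms \<open>i \<in> {..<?n}\<close> by (simp add: nth_append)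
    qed
  qed
  also have "\<dots> = chg t1 * chg t2"
    by (simp add: chg_nth sum_product assms)
  also have "(\<Sum>i<length hs2. \<Sum>j<?n. f (?n+i) j) = 0"
  proof (intro sum.neutral ballI)
    fix i j assume "i \<in> {..<length hs2}" "j \<in> {..<?n}"
    moreover have hj: "hs1 ! j < ?n" using assms(1) \<open>j \<in> {..<?n}\<close> by auto
    ultimately have "\<not> ?hs!(?n+i) < ?hs!j" by (simp add: nth_append)
    then show "f (?n+i) j = 0" unfolding f_def by simp
  qed
  also have "(\<Sum>i<length hs2. \<Sum>j<length hs2. f (?n+i) (?n+j)) = corr_out hs2 t2"
    unfolding corr_out_def f_def using assms by (auto simp: nth_append intro!: sum.cong)
  finally show ?thesis by simp
qed

lemma corr_in_app:
  assumes "\<forall>h\<in>set hs1. h < length hs1" "length t1 = length hs1" "length t2 = length hs2"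
  shows "corr_in (hs1 @ map (\<lambda>h. h + length hs1) hs2) (t1 @ t2)
     = corr_in hs1 t1 + corr_in hs2 t2 - chg t1 * chg t2"
  using corr_out_app[OF assms] by (simp add: corr_in_neg)

lemma hts_bound: "(\<forall>h\<in>set (out_hts D). h < length (out_hts D)) \<and> (\<forall>h\<in>set (in_hts D). h < length (in_hts D))"
proof (induction D)
  case (DElem e) then show ?case by (cases e) auto
qed auto

lemma mtab_nz: "mtab tab t s \<noteq> 0 \<Longrightarrow> (t,s) \<in> fst ` set tab"
  unfolding mtab_def by (auto split: option.splits dest: map_of_SomeD intro: rev_image_eqI)

lemma G_elem_chg: "G_elem w e t s \<noteq> 0 \<Longrightarrow> chg t = chg s"
  by (cases e) (auto dest!: mtab_nz simp: idmat_def chg_def sv_def split: if_splits)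

lemma Gop_chg: "Gop w D t s \<noteq> 0 \<Longrightarrow> chg t = chg s"
proof (induction D arbitrary: t s)
  case DEmpty then show ?case by (simp add: idmat_def split: if_splits)
next
  case (DElem e) then show ?case by (simp add: G_elem_chg)
next
  case (DTens a b)
  let ?n = "length (out_hts a)" and ?m = "length (in_hts a)"
  from DTens.prems have "Gop w a (take ?n t) (take ?m s) \<noteq> 0" "Gop w b (drop ?n t) (drop ?m s) \<noteq> 0"
    by (auto simp: mtens_def)
  then have "chg (take ?n t) = chg (take ?m s)" "chg (drop ?n t) = chg (drop ?m s)"
    using DTens.IH by blast+
  then show ?case
    by (metis append_take_drop_id chg_append)
next
  case (DComp a b)
  from DComp.prems obtain u where "Gop w a t u * Gop w b u s \<noteq> 0"
    unfolding mcomp_def Gop.simps by (meson sum.not_neutral_contains_not_neutral)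
  then show ?case using DComp.IH by auto
qed

lemma fin_len: "finite {u :: bool list. length u = k}"
  using finite_lists_length_eq[of "UNIV :: bool set" k] by simp

lemma mcomp_corr_left: "length t = k \<Longrightarrow> mcomp k (corr_op w c) A t s = w powi c t * A t s"
proof -
  assume "length t = k"
  have "mcomp k (corr_op w c) A t s = (\<Sum>u\<in>{u. length u = k}. if t = u then w powi c u * A u s else 0)"
    unfolding mcomp_def corr_op_def by (intro sum.cong) auto
  also have "\<dots> = w powi c t * A t s" using \<open>length t = k\<close> by (simp add: fin_len)
  finally show ?thesis .
qed

lemma mcomp_corr_right: "length s = k \<Longrightarrow> mcomp k A (corr_op w c) t s = A t s * w powi c s"
proof -
  assume "length s = k"
  have "mcomp k A (corr_op w c) t s = (\<Sum>u\<in>{u. length u = k}. if u = s then A t u * w powi c u else 0)"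
    unfolding mcomp_def corr_op_def by (intro sum.cong) auto
  also have "\<dots> = A t s * w powi c s" using \<open>length s = k\<close> by (simp add: fin_len)
  finally show ?thesis .
qed

lemma len2E: "length t = Suc (Suc 0) \<Longrightarrow> (\<And>a b. t = [a,b] \<Longrightarrow> P) \<Longrightarrow> P"
  by (cases t; cases "tl t") auto

lemma len1E: "length t = Suc 0 \<Longrightarrow> (\<And>a. t = [a] \<Longrightarrow> P) \<Longrightarrow> P"
  by (cases t) auto

lemma corr_out2: "corr_out [h0,h1] [a,b] = (if h0 < h1 then sv a * sv b else 0) + (if h1 < h0 then - sv a * sv b else 0)"
  unfolding corr_out_def by (simp add: numeral_2_eq_2 lessThan_Suc)

lemma corr_in2: "corr_in [h0,h1] [a,b] = - ((if h0 < h1 then sv a * sv b else 0) + (if h1 < h0 then - sv a * sv b else 0))"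
  by (simp add: corr_in_neg corr_out2)

lemma corr_out1: "corr_out [h] [a] = 0" unfolding corr_out_def by simp
lemma corr_in1: "corr_in [h] [a] = 0" unfolding corr_in_def by simp
lemma corr_out0: "corr_out [] [] = 0" unfolding corr_out_def by simp
lemma corr_in0: "corr_in [] [] = 0" unfolding corr_in_def by simp

lemma set2: "{u :: bool list. length u = 2} = {[True,True],[True,False],[False,True],[False,False]}"
  by (auto simp: numeral_2_eq_2 elim!: len2E)

lemma mcomp2: "mcomp 2 A B t s = A t [True,True] * B [True,True] s + A t [True,False] * B [True,False] s
   + A t [False,True] * B [False,True] s + A t [False,False] * B [False,False] s"
  unfolding mcomp_def set2 by simp

lemma mcomp_P_right: "mcomp 2 A P_flip t [c,d] = A t [d,c]"
  by (cases c; cases d) (simp_all add: mcomp2 P_flip_def)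

lemma mcomp_P_left: "mcomp 2 P_flip B [a,b] s = B [b,a] s"
  by (cases a; cases b) (simp_all add: mcomp2 P_flip_def)

lemma ok_EId:
  assumes w: "w \<noteq> 0" and "length t = length (elem_out_hts (EId x))" "length s = length (elem_in_hts (EId x))"
  shows "F_elem w (EId x) t s = w powi (2*elem_wr (EId x) + corr_out (elem_out_hts (EId x)) t + corr_in (elem_in_hts (EId x)) s) * G_elem w (EId x) t s"
  using assms
  apply (auto elim!: len2E len1E simp: corr_out1 corr_in1 corr_out0 corr_in0 corr_out2 corr_in2 mtab_def sv_def F_M_def F_Minv_def)
  done

lemma ok_ECup:
  assumes w: "w \<noteq> 0" and "length t = length (elem_out_hts (ECup x))" "length s = length (elem_in_hts (ECup x))"
  shows "F_elem w (ECup x) t s = w powi (2*elem_wr (ECup x) + corr_out (elem_out_hts (ECup x)) t + corr_in (elem_in_hts (ECup x)) s) * G_elem w (ECup x) t s"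
  using assms
  apply (auto elim!: len2E len1E simp: corr_out1 corr_in1 corr_out0 corr_in0 corr_out2 corr_in2 mtab_def sv_def F_M_def F_Minv_def)
  apply (simp_all add: power_int_minus power_int_numeral field_simps eval_nat_numeral)
  done

lemma ok_ECap:
  assumes w: "w \<noteq> 0" and "length t = length (elem_out_hts (ECap x))" "length s = length (elem_in_hts (ECap x))"
  shows "F_elem w (ECap x) t s = w powi (2*elem_wr (ECap x) + corr_out (elem_out_hts (ECap x)) t + corr_in (elem_in_hts (ECap x)) s) * G_elem w (ECap x) t s"
  using assms
  apply (auto elim!: len2E len1E simp: corr_out1 corr_in1 corr_out0 corr_in0 corr_out2 corr_in2 mtab_def sv_def F_M_def F_Minv_def)
  apply (simp_all add: power_int_minus power_int_numeral field_simps eval_nat_numeral)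
  done

lemma ok_EHE1:
  assumes w: "w \<noteq> 0" and "length t = length (elem_out_hts (EHE1 x y))" "length s = length (elem_in_hts (EHE1 x y))"
  shows "F_elem w (EHE1 x y) t s = w powi (2*elem_wr (EHE1 x y) + corr_out (elem_out_hts (EHE1 x y)) t + corr_in (elem_in_hts (EHE1 x y)) s) * G_elem w (EHE1 x y) t s"
  using assms
  apply (auto elim!: len2E len1E simp: corr_out1 corr_in1 corr_out0 corr_in0 corr_out2 corr_in2 mtab_def sv_def F_M_def F_Minv_def)
  apply (simp_all add: power_int_minus power_int_numeral field_simps eval_nat_numeral)
  done

lemma ok_EHE2:
  assumes w: "w \<noteq> 0" and "length t = length (elem_out_hts (EHE2 x y))" "length s = length (elem_in_hts (EHE2 x y))"
  shows "F_elem w (EHE2 x y) t s = w powi (2*elem_wr (EHE2 x y) + corr_out (elem_out_hts (EHE2 x y)) t + corr_in (elem_in_hts (EHE2 x y)) s) * G_elem w (EHE2 x y) t s"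
  using assms
  apply (auto elim!: len2E len1E simp: corr_out1 corr_in1 corr_out0 corr_in0 corr_out2 corr_in2 mtab_def sv_def F_M_def F_Minv_def)
  apply (simp_all add: power_int_minus power_int_numeral field_simps eval_nat_numeral)
  done

lemma ok_EPos:
  assumes w: "w \<noteq> 0" and "length t = length (elem_out_hts (EPos x))" "length s = length (elem_in_hts (EPos x))"
  shows "F_elem w (EPos x) t s = w powi (2*elem_wr (EPos x) + corr_out (elem_out_hts (EPos x)) t + corr_in (elem_in_hts (EPos x)) s) * G_elem w (EPos x) t s"
proof -
  obtain a b where t: "t = [a,b]" using assms(2) by (auto elim!: len2E)
  obtain c d where s: "s = [c,d]" using assms(3) by (auto elim!: len2E)
  show ?thesis unfolding t s
    apply (simp only: F_elem.simps mcomp_P_right)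
    apply (cases a; cases b; cases c; cases d)
    apply (simp_all add: corr_out2 corr_in2 mtab_def sv_def F_Minv_def)
    apply (simp_all add: power_int_minus power_int_numeral field_simps eval_nat_numeral w)
    done
qed

lemma ok_ENeg:
  assumes w: "w \<noteq> 0" and "length t = length (elem_out_hts (ENeg x))" "length s = length (elem_in_hts (ENeg x))"
  shows "F_elem w (ENeg x) t s = w powi (2*elem_wr (ENeg x) + corr_out (elem_out_hts (ENeg x)) t + corr_in (elem_in_hts (ENeg x)) s) * G_elem w (ENeg x) t s"
proof -
  obtain a b where t: "t = [a,b]" using assms(2) by (auto elim!: len2E)
  obtain c d where s: "s = [c,d]" using assms(3) by (auto elim!: len2E)
  show ?thesis unfolding t s
    apply (simp only: F_elem.simps mcomp_P_left)
    apply (cases a; cases b; cases c; cases d)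
    apply (simp_all add: corr_out2 corr_in2 mtab_def sv_def F_M_def)
    apply (simp_all add: power_int_minus power_int_numeral field_simps eval_nat_numeral w)
    done
qed

lemma elem_ok:
  assumes w: "w \<noteq> 0" and "length t = length (elem_out_hts e)" "length s = length (elem_in_hts e)"
  shows "F_elem w e t s = w powi (2*elem_wr e + corr_out (elem_out_hts e) t + corr_in (elem_in_hts e) s) * G_elem w e t s"
  using assms by (cases e) (blast intro: ok_EId ok_ECup ok_ECap ok_EHE1 ok_EHE2 ok_EPos ok_ENeg)+

lemma main:
  assumes w: "w \<noteq> 0"
  shows "wf_diag D \<Longrightarrow> \<forall>t s. length t = length (out_hts D) \<longrightarrow> length s = length (in_hts D) \<longrightarrow>
    Fop w D t s = w powi (2 * writhe D + corr_out (out_hts D) t + corr_in (in_hts D) s) * Gop w D t s"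
proof (induction D)
  case DEmpty
  then show ?case by (simp add: corr_out0 corr_in0)
next
  case (DElem e)
  then show ?case using elem_ok[OF w] by simp
next
  case (DTens a b)
  show ?case
  proof (intro allI impI)
    fix t s :: "bool list"
    assume lt: "length t = length (out_hts (DTens a b))" and ls: "length s = length (in_hts (DTens a b))"
    let ?n = "length (out_hts a)" and ?m = "length (in_hts a)"
    define t1 where "t1 = take ?n t"
    define t2 where "t2 = drop ?n t"
    define s1 where "s1 = take ?m s"
    define s2 where "s2 = drop ?m s"
    have tt: "t = t1 @ t2" and ss: "s = s1 @ s2" by (simp_all add: t1_def t2_def s1_def s2_def)
    have l: "length t1 = ?n" "length t2 = length (out_hts b)" "length s1 = ?m" "length s2 = length (in_hts b)"
      using lt ls by (simp_all add: t1_def t2_def s1_def s2_def)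
    have wa: "wf_diag a" and wb: "wf_diag b" using DTens.prems by auto
    have Fa: "Fop w a t1 s1 = w powi (2 * writhe a + corr_out (out_hts a) t1 + corr_in (in_hts a) s1) * Gop w a t1 s1"
      using DTens.IH(1)[OF wa] l by blast
    have Fb: "Fop w b t2 s2 = w powi (2 * writhe b + corr_out (out_hts b) t2 + corr_in (in_hts b) s2) * Gop w b t2 s2"
      using DTens.IH(2)[OF wb] l by blast
    have co: "corr_out (out_hts (DTens a b)) t = corr_out (out_hts a) t1 + corr_out (out_hts b) t2 + chg t1 * chg t2"
      unfolding tt using corr_out_app[of "out_hts a" t1 t2 "out_hts b"] hts_bound[of a] l by simp
    have ci: "corr_in (in_hts (DTens a b)) s = corr_in (in_hts a) s1 + corr_in (in_hts b) s2 - chg s1 * chg s2"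
      unfolding ss using corr_in_app[of "in_hts a" s1 s2 "in_hts b"] hts_bound[of a] l by simp
    have FT: "Fop w (DTens a b) t s = Fop w a t1 s1 * Fop w b t2 s2"
      by (simp add: mtens_def t1_def t2_def s1_def s2_def)
    have GT: "Gop w (DTens a b) t s = Gop w a t1 s1 * Gop w b t2 s2"
      by (simp add: mtens_def t1_def t2_def s1_def s2_def)
    show "Fop w (DTens a b) t s = w powi (2 * writhe (DTens a b) + corr_out (out_hts (DTens a b)) t + corr_in (in_hts (DTens a b)) s) * Gop w (DTens a b) t s"
    proof (cases "Gop w a t1 s1 = 0 \<or> Gop w b t2 s2 = 0")
      case True
      then show ?thesis using FT GT Fa Fb by auto
    next
      case False
      then have c1: "chg t1 = chg s1" and c2: "chg t2 = chg s2" using Gop_chg by blast+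
      have e: "2 * writhe (DTens a b) + corr_out (out_hts (DTens a b)) t + corr_in (in_hts (DTens a b)) s
        = (2 * writhe a + corr_out (out_hts a) t1 + corr_in (in_hts a) s1) + (2 * writhe b + corr_out (out_hts b) t2 + corr_in (in_hts b) s2)"
        using co ci c1 c2 by simp
      show ?thesis unfolding FT GT Fa Fb e power_int_add[OF disjI1[OF w]] by (simp add: ac_simps)
    qed
  qed
next
  case (DComp a b)
  show ?case
  proof (intro allI impI)
    fix t s :: "bool list"
    assume lt: "length t = length (out_hts (DComp a b))" and ls: "length s = length (in_hts (DComp a b))"
    have wa: "wf_diag a" and wb: "wf_diag b" and hab: "in_hts a = out_hts b"
      using DComp.prems by auto
    let ?E = "2 * writhe (DComp a b) + corr_out (out_hts (DComp a b)) t + corr_in (in_hts (DComp a b)) s"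
    have "Fop w (DComp a b) t s = (\<Sum>u\<in>{u. length u = length (in_hts a)}. Fop w a t u * Fop w b u s)"
      by (simp add: mcomp_def)
    also have "\<dots> = (\<Sum>u\<in>{u. length u = length (in_hts a)}. w powi ?E * (Gop w a t u * Gop w b u s))"
    proof (intro sum.cong refl)
      fix u :: "bool list" assume "u \<in> {u. length u = length (in_hts a)}"
      then have lu: "length u = length (in_hts a)" "length u = length (out_hts b)" using hab by auto
      have Fa: "Fop w a t u = w powi (2 * writhe a + corr_out (out_hts a) t + corr_in (in_hts a) u) * Gop w a t u"
        using DComp.IH(1)[OF wa] lt lu by simp
      have Fb: "Fop w b u s = w powi (2 * writhe b + corr_out (out_hts b) u + corr_in (in_hts b) s) * Gop w b u s"
        using DComp.IH(2)[OF wb] ls lu by simp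
      have e: "?E = (2 * writhe a + corr_out (out_hts a) t + corr_in (in_hts a) u) + (2 * writhe b + corr_out (out_hts b) u + corr_in (in_hts b) s)"
        using hab by (simp add: corr_in_neg)
      show "Fop w a t u * Fop w b u s = w powi ?E * (Gop w a t u * Gop w b u s)"
        unfolding Fa Fb e power_int_add[OF disjI1[OF w]] by (simp add: ac_simps)
    qed
    also have "\<dots> = w powi ?E * Gop w (DComp a b) t s"
      by (simp add: mcomp_def sum_distrib_left)
    finally show "Fop w (DComp a b) t s = w powi ?E * Gop w (DComp a b) t s" .
  qed
qed

theorem lemma5p15:
  fixes w :: complex and D :: diag
  assumes "w \<noteq> 0" and "wf_diag D"
  shows "\<forall>t s. length t = length (out_hts D) \<longrightarrow> length s = length (in_hts D) \<longrightarrow>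
           Fop w D t s =
           w powi (2 * writhe D) *
           mcomp (length (out_hts D))
             (corr_op w (corr_out (out_hts D)))
             (mcomp (length (in_hts D)) (Gop w D) (corr_op w (corr_in (in_hts D)))) t s"
proof (intro allI impI)
  fix t s :: "bool list" assume lt: "length t = length (out_hts D)" and ls: "length s = length (in_hts D)"
  have "Fop w D t s = w powi (2 * writhe D + corr_out (out_hts D) t + corr_in (in_hts D) s) * Gop w D t s"
    using main[OF assms(1) assms(2)] lt ls by blast
  also have "\<dots> = w powi (2 * writhe D) * (w powi corr_out (out_hts D) t * (Gop w D t s * w powi corr_in (in_hts D) s))"
    using assms(1) by (simp add: power_int_add ac_simps)
  finally show "Fop w D t s = w powi (2 * writhe D) *
           mcomp (length (out_hts D))
             (corr_op w (corr_out (out_hts D)))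
             (mcomp (length (in_hts D)) (Gop w D) (corr_op w (corr_in (in_hts D)))) t s"
    using lt ls by (simp add: mcomp_corr_left mcomp_corr_right)
qed

end
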